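(* Let $\mathcal{U}_i$ be a finite set, $D_i$ a probability distribution on $\mathcal{U}_i$, and $\bm{z}_i\in[0,1]^{\mathcal{U}_i}$ with $z_e\le D_i(e)$ for all $e\in\mathcal{U}_i$. Let $R\sim\bm{z}_i$ denote the random subset of $\mathcal{U}_i$ containing each $e$ independently with probability $z_e$. Consider the random set $T_i\subseteq\mathcal{U}_i$ produced as follows: draw $X_i\sim D_i$ with realization $e$; with probability $\Pr_{R\sim\bm{z}_i}[R=\{e\}]/D_i(e)$ set $T_i=\{e\}$; otherwise set $T_i$ to an (independent) random set drawn from $\bm{z}_i$ conditioned on $|R|\ne1$. Then for every $S\subseteq\mathcal{U}_i$, \[\Pr[T_i=S]=\Pr_{R\sim\bm{z}_i}[R=S].\]
   Context: Note $\Pr_{R\sim\bm{z}_i}[R=S]=\prod_{e\in S}z_e\prod_{e\in\mathcal{U}_i\setminus S}(1-z_e)$; the hypothesis $z_e\le D_i(e)$ ensures the probability $\Pr[R=\{e\}]/D_i(e)$ is at most $1$ (for realized $e$, $D_i(e)>0$). The conditioned draw is only needed in the "otherwise" branch. *)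

theory Defs
  imports "HOL-Probability.Probability"
begin

definition zdist :: "'a set \<Rightarrow> ('a \<Rightarrow> real) \<Rightarrow> 'a set pmf" where
  "zdist U z = map_pmf (\<lambda>f. {e \<in> U. f e}) (Pi_pmf U False (\<lambda>e. bernoulli_pmf (z e)))"

definition T_dist :: "'a set \<Rightarrow> 'a pmf \<Rightarrow> ('a \<Rightarrow> real) \<Rightarrow> 'a set pmf" where
  "T_dist U D z =
     bind_pmf D (\<lambda>e.
       bind_pmf (bernoulli_pmf (pmf (zdist U z) {e} / pmf D e)) (\<lambda>b.
         if b then return_pmf {e}
         else cond_pmf (zdist U z) {S. card S \<noteq> 1}))"

end

theory Submission
  imports Defs
begin

lemma zdist_set: "set_pmf (zdist U z) \<subseteq> Pow U"
  unfolding zdist_def by auto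

lemma zdist_single_le:
  assumes "finite U" "e \<in> U" "0 \<le> z e" "z e \<le> 1"
  shows "pmf (zdist U z) {e} \<le> z e"
proof -
  let ?Pi = "Pi_pmf U False (\<lambda>e. bernoulli_pmf (z e))"
  have "pmf (zdist U z) {e} = measure (zdist U z) {{e}}"
    by (simp add: measure_pmf_single)
  also have "\<dots> \<le> measure (zdist U z) {S. e \<in> S}"
    by (intro measure_pmf.finite_measure_mono) auto
  also have "\<dots> = measure ?Pi ((\<lambda>f. f e) -` {True})"
    unfolding zdist_def measure_map_pmf using assms(2)
    by (intro arg_cong[where f="measure ?Pi"]) auto
  also have "\<dots> = measure (map_pmf (\<lambda>f. f e) ?Pi) {True}"
    by simp
  also have "\<dots> = z e"
    using Pi_pmf_component[OF assms(1), of e False] assms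
    by (simp add: measure_pmf_single)
  finally show ?thesis .
qed

lemma zdist_sum_single:
  assumes "finite U"
  shows "(\<Sum>e\<in>U. pmf (zdist U z) {e}) = measure (zdist U z) {S. card S = 1}"
proof -
  let ?P = "zdist U z"
  have "{S. card S = 1} \<inter> set_pmf ?P = ((\<lambda>e. {e}) ` U) \<inter> set_pmf ?P"
    using zdist_set[of U z] by (auto simp: card_Suc_eq)
  then have "measure ?P {S. card S = 1} = measure ?P ((\<lambda>e. {e}) ` U)"
    by (metis measure_Int_set_pmf)
  also have "\<dots> = (\<Sum>S\<in>(\<lambda>e. {e}) ` U. pmf ?P S)"
    using assms by (simp add: measure_measure_pmf_finite)
  also have "\<dots> = (\<Sum>e\<in>U. pmf ?P {e})"
    by (subst sum.reindex) (auto simp: inj_on_def)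
  finally show ?thesis by simp
qed

theorem lemma5:
  fixes U :: "'a set" and D :: "'a pmf" and z :: "'a \<Rightarrow> real"
  assumes "finite U"
    and "set_pmf D \<subseteq> U"
    and "\<And>e. e \<in> U \<Longrightarrow> 0 \<le> z e \<and> z e \<le> 1"
    and "\<And>e. e \<in> U \<Longrightarrow> z e \<le> pmf D e"
    and "S \<subseteq> U"
  shows "pmf (T_dist U D z) S = pmf (zdist U z) S"
proof -
  let ?P = "zdist U z"
  let ?C = "cond_pmf ?P {S. card S \<noteq> 1}"
  define c where "c = pmf ?C S"
  let ?f = "\<lambda>e b. if b then return_pmf {e} else ?C"
  have "pmf (T_dist U D z) S = (\<Sum>e\<in>U. pmf (bind_pmf (bernoulli_pmf (pmf ?P {e} / pmf D e)) (?f e)) S * pmf D e)"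
    unfolding T_dist_def pmf_bind[of D]
    by (rule integral_measure_pmf_real) (use assms(1,2) in auto)
  also have "\<dots> = (\<Sum>e\<in>U. pmf ?P {e} * of_bool (S = {e}) + (pmf D e - pmf ?P {e}) * c)"
  proof (rule sum.cong[OF refl])
    fix e assume e: "e \<in> U"
    show "pmf (bind_pmf (bernoulli_pmf (pmf ?P {e} / pmf D e)) (?f e)) S * pmf D e =
          pmf ?P {e} * of_bool (S = {e}) + (pmf D e - pmf ?P {e}) * c"
    proof (cases "pmf D e = 0")
      case True
      have "pmf ?P {e} \<le> 0"
        using zdist_single_le[OF assms(1) e, of z] assms(3,4)[OF e] True by force
      then have "pmf ?P {e} = 0" using pmf_nonneg[of ?P "{e}"] by linarith
      then show ?thesis using True by simp
    next
      case False
      have pos: "pmf D e > 0" using False pmf_nonneg[of D e] by linarith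
      have le: "pmf ?P {e} \<le> pmf D e"
        using zdist_single_le[OF assms(1) e, of z] assms(3,4)[OF e] by force
      define q where "q = pmf ?P {e} / pmf D e"
      have q0: "0 \<le> q" unfolding q_def using pos by simp
      have q1: "q \<le> 1" unfolding q_def using pos le by simp
      have hB: "pmf (bind_pmf (bernoulli_pmf q) (?f e)) S = q * of_bool (S = {e}) + (1 - q) * c"
        unfolding pmf_bind c_def using q0 q1 by (simp add: pmf_return mult.commute indicator_def)
      moreover have "q * pmf D e = pmf ?P {e}" unfolding q_def using pos by simp
      ultimately have "pmf (bind_pmf (bernoulli_pmf q) (?f e)) S * pmf D e
          = (q * pmf D e) * of_bool (S = {e}) + (pmf D e - q * pmf D e) * c"
      proof -
        have gen: "B * d = (q * d) * i + (d - q * d) * c" if "B = q * i + (1 - q) * c"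
          for B d i :: real unfolding that by (simp add: algebra_simps)
        show ?thesis using hB by (rule gen)
      qed
      then show ?thesis unfolding q_def[symmetric] using \<open>q * pmf D e = pmf ?P {e}\<close> by simp
    qed
  qed
  also have "\<dots> = (\<Sum>e\<in>U. pmf ?P {e} * of_bool (S = {e})) + (1 - measure ?P {S. card S = 1}) * c"
    using zdist_sum_single[OF assms(1), of z] sum_pmf_eq_1[OF assms(1,2)]
    by (simp add: sum.distrib sum_subtractf left_diff_distrib sum_distrib_right[symmetric])
  also have "(\<Sum>e\<in>U. pmf ?P {e} * of_bool (S = {e})) = (if card S = 1 then pmf ?P S else 0)"
  proof (cases "card S = 1")
    case True
    then obtain a where a: "S = {a}" by (auto simp: card_Suc_eq)
    with assms(5) have "a \<in> U" by auto
    then show ?thesis using a True assms(1)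
      by (simp add: of_bool_def if_distrib cong: if_cong) 
  next
    case False
    then have "\<And>e. S \<noteq> {e}" by auto
    then show ?thesis using False by simp
  qed
  also have "1 - measure ?P {S. card S = 1} = measure ?P {S. card S \<noteq> 1}"
    using measure_pmf.prob_compl[of "{S. card S = 1}" ?P] by (simp add: Compl_eq_Diff_UNIV[symmetric] Collect_neg_eq[symmetric])
  also have "measure ?P {S. card S \<noteq> 1} * c = (if card S = 1 then 0 else pmf ?P S)"
  proof (cases "set_pmf ?P \<inter> {S. card S \<noteq> 1} = {}")
    case True
    then have "measure ?P {S. card S \<noteq> 1} = 0" by (simp add: measure_pmf_zero_iff)
    moreover have "card S \<noteq> 1 \<Longrightarrow> pmf ?P S = 0" using True by (auto simp: set_pmf_eq)
    ultimately show ?thesis by simp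
  next
    case False
    have "measure ?P {S. card S \<noteq> 1} \<noteq> 0" using False by (simp add: measure_pmf_zero_iff)
    then show ?thesis unfolding c_def pmf_cond[OF False] by simp
  qed
  finally show ?thesis by simp
qed

end
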